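(* Let $Q$ be a meromorphic function on $\mathbb{C}$, not identically zero. Let $M_Q$ be the family of meromorphic functions $f$ on $\mathbb{C}$, not identically zero, satisfying $Q(s)f(s)=Q(1-s)f(1-s)$ for all $s$, and let $H_Q\subset M_Q$ be the subfamily of entire functions in $M_Q$. Let $RM_Q$ (resp. $RH_Q$) be the set of $f\in M_Q$ (resp. $f\in H_Q$) such that all zeros of $\Lambda_Q(f,s):=Q(s)f(s)$ lie on the critical axis $\Re s=1/2$. Then $M_Q\setminus RM_Q$ is open and dense in $M_Q$, and $H_Q\setminus RH_Q$ is open and dense in $H_Q$.
   Context: $M_Q$ (and $H_Q$) carry the topology of uniform convergence on compacta: a sequence $f_n\in M_Q$ converges to $f\in M_Q$ if for each compact $K\subset\mathbb{C}$ and each $\epsilon>0$ there is $n_0$ such that for $n>n_0$ the functions $f$ and $f_n$ have the same poles with the same principal parts on $K$ and $|f(z)-f_n(z)|<\epsilon$ for all $z\in K$. A basic neighbourhood of $f$ is of the form $\{g\in M_Q:\max_{s\in K}|f(s)-g(s)|<\epsilon\}$ for compact $K$ and $\epsilon>0$. *)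

theory Defs
  imports "HOL-Complex_Analysis.Complex_Analysis"
begin

text \<open>A meromorphic function on the plane is represented by its canonical
  ("nicely meromorphic") representative: removable singularities are filled in,
  and the value at a pole is 0.  "Not identically zero" is expressed as a
  property of the germ (independent of the representative).\<close>

definition not_ident_zero :: "(complex \<Rightarrow> complex) \<Rightarrow> bool" where
  "not_ident_zero f \<longleftrightarrow> (\<exists>z. \<not> (\<forall>\<^sub>F w in at z. f w = 0))"

definition MQ :: "(complex \<Rightarrow> complex) \<Rightarrow> (complex \<Rightarrow> complex) set" where
  "MQ Q = {f. f nicely_meromorphic_on UNIV \<and> not_ident_zero f \<and>
              (\<forall>z. \<forall>\<^sub>F s in at z. Q s * f s = Q (1 - s) * f (1 - s))}"

definition HQ :: "(complex \<Rightarrow> complex) \<Rightarrow> (complex \<Rightarrow> complex) set" where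
  "HQ Q = {f \<in> MQ Q. f holomorphic_on UNIV}"

definition mero_zero :: "(complex \<Rightarrow> complex) \<Rightarrow> complex \<Rightarrow> bool" where
  "mero_zero F z \<longleftrightarrow> (F \<longlongrightarrow> 0) (at z)"

definition Lambda_Q :: "(complex \<Rightarrow> complex) \<Rightarrow> (complex \<Rightarrow> complex) \<Rightarrow> complex \<Rightarrow> complex" where
  "Lambda_Q Q f = (\<lambda>s. Q s * f s)"

definition RMQ :: "(complex \<Rightarrow> complex) \<Rightarrow> (complex \<Rightarrow> complex) set" where
  "RMQ Q = {f \<in> MQ Q. \<forall>z. mero_zero (Lambda_Q Q f) z \<longrightarrow> Re z = 1/2}"

definition RHQ :: "(complex \<Rightarrow> complex) \<Rightarrow> (complex \<Rightarrow> complex) set" where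
  "RHQ Q = {f \<in> HQ Q. \<forall>z. mero_zero (Lambda_Q Q f) z \<longrightarrow> Re z = 1/2}"

text \<open>Basic neighbourhood of f in a family A for compact K and eps > 0:
  g has the same poles with the same principal parts as f on K (i.e. f - g has
  only removable singularities on K), and the continuous extension of f - g
  has modulus < eps on K (equivalently its maximum on K is < eps).\<close>

definition mero_nbhd ::
  "(complex \<Rightarrow> complex) set \<Rightarrow> (complex \<Rightarrow> complex) \<Rightarrow> complex set \<Rightarrow> real \<Rightarrow> (complex \<Rightarrow> complex) set" where
  "mero_nbhd A f K e = {g \<in> A. \<forall>z\<in>K. \<exists>c. ((\<lambda>w. f w - g w) \<longlongrightarrow> c) (at z) \<and> norm c < e}"

text \<open>Open and dense subsets of A in the topology of uniform convergence on compacta.\<close>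

definition mero_open :: "(complex \<Rightarrow> complex) set \<Rightarrow> (complex \<Rightarrow> complex) set \<Rightarrow> bool" where
  "mero_open A U \<longleftrightarrow> U \<subseteq> A \<and>
     (\<forall>f\<in>U. \<exists>K e. compact K \<and> e > 0 \<and> mero_nbhd A f K e \<subseteq> U)"

definition mero_dense :: "(complex \<Rightarrow> complex) set \<Rightarrow> (complex \<Rightarrow> complex) set \<Rightarrow> bool" where
  "mero_dense A S \<longleftrightarrow> S \<subseteq> A \<and>
     (\<forall>f\<in>A. \<forall>K e. compact K \<and> e > 0 \<longrightarrow> mero_nbhd A f K e \<inter> S \<noteq> {})"

end

theory Submission
  imports Defs
begin

lemma ev_analytic:
  assumes "F meromorphic_on UNIV"
  shows "\<forall>\<^sub>F s in at z. F analytic_on {s}"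
  by (rule eventually_cosparse_imp_eventually_at[OF meromorphic_on_imp_analytic_cosparse[OF assms]]) auto

lemma ev_nonzero:
  assumes "F meromorphic_on UNIV" "not_ident_zero F"
  shows "\<forall>\<^sub>F s in at z. F s \<noteq> 0"
proof -
  have "eventually (\<lambda>z. F z = 0) (cosparse UNIV) \<or> eventually (\<lambda>z. F z \<noteq> 0) (cosparse UNIV)"
    by (rule meromorphic_imp_constant_or_avoid[OF assms(1)]) auto
  thus ?thesis
  proof
    assume "eventually (\<lambda>z. F z = 0) (cosparse UNIV)"
    hence "\<forall>z. \<forall>\<^sub>F w in at z. F w = 0"
      by (auto simp: eventually_cosparse_open_eq)
    with assms(2) show ?thesis unfolding not_ident_zero_def by blast
  qed (auto simp: eventually_cosparse_open_eq)
qed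

lemma re_half:
  fixes w :: complex
  assumes "cmod (w - 1) < cmod w"
  shows "Re w > 1/2"
proof -
  have "cmod (w - 1)^2 < cmod w ^2"
    using assms by (intro power_strict_mono) auto
  hence "(Re w - 1)^2 + (Im w)^2 < (Re w)^2 + (Im w)^2"
    by (simp add: cmod_power2)
  thus ?thesis by (simp add: power2_eq_square algebra_simps)
qed

lemma open_main:
  assumes Qm: "Q meromorphic_on UNIV" and Qnz: "not_ident_zero Q"
    and f: "f \<in> MQ Q" and z0: "Re z0 \<noteq> 1/2" "((\<lambda>s. Q s * f s) \<longlongrightarrow> 0) (at z0)"
  shows "\<exists>K e. compact K \<and> e > 0 \<and> (\<forall>g\<in>MQ Q. (\<forall>z\<in>K. \<exists>c. ((\<lambda>w. f w - g w) \<longlongrightarrow> c) (at z) \<and> norm c < e)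
            \<longrightarrow> (\<exists>z. Re z \<noteq> 1/2 \<and> ((\<lambda>s. Q s * g s) \<longlongrightarrow> 0) (at z)))"
proof -
  have fnm: "f nicely_meromorphic_on UNIV" and fnz: "not_ident_zero f"
    using f by (auto simp: MQ_def)
  have fm: "f meromorphic_on UNIV" using fnm by (simp add: nicely_meromorphic_on_def)
  have "\<forall>\<^sub>F s in at z0. f analytic_on {s} \<and> f s \<noteq> 0 \<and> Q analytic_on {s} \<and> Q s \<noteq> 0"
    using ev_analytic[OF fm] ev_nonzero[OF fm fnz] ev_analytic[OF Qm] ev_nonzero[OF Qm Qnz]
    by eventually_elim auto
  then obtain d where d: "d > 0" and dP: "\<And>s. s \<noteq> z0 \<Longrightarrow> dist s z0 < d \<Longrightarrow>
       f analytic_on {s} \<and> f s \<noteq> 0 \<and> Q analytic_on {s} \<and> Q s \<noteq> 0"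
    unfolding eventually_at by blast
  define r where "r = min (d/2) (\<bar>Re z0 - 1/2\<bar>/2)"
  have r: "r > 0" using d z0(1) by (auto simp: r_def)
  have offline: "Re s \<noteq> 1/2" if "s \<in> cball z0 r" for s
  proof -
    have "\<bar>Re s - Re z0\<bar> \<le> cmod (s - z0)" by (metis abs_Re_le_cmod minus_complex.simps(1))
    also have "\<dots> \<le> r" using that by (simp add: dist_norm norm_minus_commute)
    also have "\<dots> < \<bar>Re z0 - 1/2\<bar>"
    proof -
      have h: "\<bar>Re z0 - 1/2\<bar> > 0" using z0(1) by auto
      have "r \<le> \<bar>Re z0 - 1/2\<bar>/2" unfolding r_def by (rule min.cobounded2)
      thus ?thesis using h by (smt (verit) field_sum_of_halves)
    qed
    finally show ?thesis by auto
  qed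
  have good: "f analytic_on {s} \<and> f s \<noteq> 0 \<and> Q analytic_on {s} \<and> Q s \<noteq> 0"
    if "s \<in> cball z0 r" "s \<noteq> z0" for s
    using dP[of s] that d by (auto simp: r_def dist_commute)
  define S where "S = sphere z0 r"
  have Ssub: "S \<subseteq> cball z0 r - {z0}" using r by (auto simp: S_def)
  have contS: "continuous_on S (\<lambda>s. norm (f s))"
  proof (intro continuous_at_imp_continuous_on ballI continuous_norm analytic_at_imp_isCont)
    fix x assume "x \<in> S"
    hence "x \<in> cball z0 r" "x \<noteq> z0" using Ssub by auto
    thus "f analytic_on {x}" using good[of x] by simp
  qed
  have cS: "compact S" "S \<noteq> {}" using r by (auto simp: S_def)
  obtain x0 where x0: "x0 \<in> S" "\<And>y. y \<in> S \<Longrightarrow> norm (f x0) \<le> norm (f y)"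
    using continuous_attains_inf[OF cS contS] by auto
  define e where "e = norm (f x0)"
  have "x0 \<in> cball z0 r" "x0 \<noteq> z0" using x0(1) Ssub by auto
  hence e: "e > 0" using good[of x0] by (simp add: e_def)
  show ?thesis
  proof (intro exI[of _ "cball z0 r"] exI[of _ e] conjI ballI impI)
    show "compact (cball z0 r)" by simp
    show "e > 0" by fact
    fix g assume g: "g \<in> MQ Q" and H: "\<forall>z\<in>cball z0 r. \<exists>c. ((\<lambda>w. f w - g w) \<longlongrightarrow> c) (at z) \<and> norm c < e"
    show "\<exists>z. Re z \<noteq> 1/2 \<and> ((\<lambda>s. Q s * g s) \<longlongrightarrow> 0) (at z)"
    proof (rule ccontr)
      assume nz: "\<not> ?thesis"
      have gnm: "g nicely_meromorphic_on UNIV" using g by (auto simp: MQ_def)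
      have gm: "g meromorphic_on UNIV" using gnm by (simp add: nicely_meromorphic_on_def)
      have g_an: "g analytic_on {z}" if z: "z \<in> cball z0 r" "z \<noteq> z0" for z
      proof -
        obtain c where c: "((\<lambda>w. f w - g w) \<longlongrightarrow> c) (at z)" using H z by blast
        have "f \<midarrow>z\<rightarrow> f z" using good[OF z] by (simp add: analytic_at_imp_isCont isContD)
        hence "((\<lambda>w. f w - (f w - g w)) \<longlongrightarrow> f z - c) (at z)" using c by (intro tendsto_intros)
        hence "g \<midarrow>z\<rightarrow> f z - c" by simp
        hence "\<not> is_pole g z" unfolding is_pole_def
          using not_tendsto_and_filterlim_at_infinity[of "at z" g] by auto
        thus ?thesis using nicely_meromorphic_on_imp_analytic_at[OF gnm] by blast
      qed
      have g_nz: "g z \<noteq> 0" if z: "z \<in> cball z0 r" "z \<noteq> z0" for z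
      proof
        assume "g z = 0"
        have "((\<lambda>s. Q s * g s) \<longlongrightarrow> Q z * g z) (at z)"
          using good[OF z] g_an[OF z]
          by (intro tendsto_mult isContD analytic_at_imp_isCont) auto
        with \<open>g z = 0\<close> offline[OF z(1)] nz show False by auto
      qed
      have "not_essential (\<lambda>s. Q s * g s) z0"
        by (rule meromorphic_on_not_essential, rule meromorphic_on_subset[of _ UNIV])
           (auto intro!: meromorphic_intros Qm gm)
      then obtain cc where cc: "cc > 0" "\<forall>\<^sub>F s in at z0. cc \<le> norm (Q s * g s)"
        unfolding not_essential_def
      proof (elim disjE exE)
        fix x assume x: "((\<lambda>s. Q s * g s) \<longlongrightarrow> x) (at z0)"
        have "x \<noteq> 0" using x nz z0(1) by auto
        have "((\<lambda>s. norm (Q s * g s)) \<longlongrightarrow> norm x) (at z0)" using x by (intro tendsto_intros)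
        hence "\<forall>\<^sub>F s in at z0. norm x / 2 < norm (Q s * g s)"
          by (rule order_tendstoD) (use \<open>x \<noteq> 0\<close> in auto)
        hence "\<forall>\<^sub>F s in at z0. norm x / 2 \<le> norm (Q s * g s)" by eventually_elim auto
        moreover have "norm x / 2 > 0" using \<open>x \<noteq> 0\<close> by auto
        ultimately show thesis using that by blast
      next
        assume "is_pole (\<lambda>s. Q s * g s) z0"
        hence "filterlim (\<lambda>s. norm (Q s * g s)) at_top (at z0)"
          unfolding is_pole_def by (rule filterlim_at_infinity_imp_norm_at_top)
        hence "\<forall>\<^sub>F s in at z0. 1 \<le> norm (Q s * g s)"
          by (simp add: filterlim_at_top)
        thus thesis using that[of 1] by auto
      qed
      define W where "W = (\<lambda>s. if s = z0 then 0 else f s / g s)"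
      have W0: "(W \<longlongrightarrow> 0) (at z0)"
      proof (rule Lim_null_comparison)
        show "\<forall>\<^sub>F s in at z0. norm (W s) \<le> norm (Q s * f s) / cc"
          using cc(2) ev_nonzero[OF Qm Qnz, of z0] eventually_neq_at_within[of z0 z0 UNIV]
        proof eventually_elim
          case (elim s)
          hence "g s \<noteq> 0" using cc(1) by auto
          hence "W s = (Q s * f s) / (Q s * g s)" using elim by (auto simp: W_def)
          hence "norm (W s) = norm (Q s * f s) / norm (Q s * g s)" by (metis norm_divide)
          also have "\<dots> \<le> norm (Q s * f s) / cc"
            using elim cc(1) by (intro divide_left_mono) (auto intro!: mult_pos_pos)
          finally show ?case .
        qed
        show "((\<lambda>s. norm (Q s * f s) / cc) \<longlongrightarrow> 0) (at z0)"
          by (rule tendsto_divide_zero[OF tendsto_norm_zero[OF z0(2)]])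
      qed
      have Wcont: "isCont W z" if "z \<in> cball z0 r" for z
      proof (cases "z = z0")
        case True
        have "W z0 = 0" by (simp add: W_def)
        thus ?thesis using W0 True unfolding isCont_def by simp
      next
        case False
        have "((\<lambda>s. f s / g s) \<longlongrightarrow> f z / g z) (at z)"
          using good[OF that False] g_an[OF that False] g_nz[OF that False]
          by (intro tendsto_divide isContD analytic_at_imp_isCont) auto
        moreover have "\<forall>\<^sub>F s in at z. f s / g s = W s"
          using eventually_neq_at_within[of z0 z UNIV] by eventually_elim (auto simp: W_def)
        ultimately have "(W \<longlongrightarrow> f z / g z) (at z)" by (rule Lim_transform_eventually)
        moreover have "W z = f z / g z" using False by (simp add: W_def)
        ultimately show ?thesis unfolding isCont_def by simp
      qed
      have Whol: "W holomorphic_on ball z0 r"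
      proof (rule no_isolated_singularity[of _ _ "{z0}"])
        show "continuous_on (ball z0 r) W"
        proof (rule continuous_at_imp_continuous_on, rule ballI)
          fix x assume "x \<in> ball z0 r" thus "isCont W x" by (intro Wcont) simp
        qed
        have fA: "f analytic_on (ball z0 r - {z0})" 
        proof (rule analytic_on_analytic_at[THEN iffD2], rule ballI)
          fix x assume "x \<in> ball z0 r - {z0}" thus "f analytic_on {x}" using good[of x] by simp
        qed
        have gA: "g analytic_on (ball z0 r - {z0})" 
        proof (rule analytic_on_analytic_at[THEN iffD2], rule ballI)
          fix x assume "x \<in> ball z0 r - {z0}" thus "g analytic_on {x}" using g_an[of x] by simp
        qed
        have "(\<lambda>s. f s / g s) holomorphic_on (ball z0 r - {z0})"
          by (rule holomorphic_on_divide[OF analytic_imp_holomorphic[OF fA] analytic_imp_holomorphic[OF gA]])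
             (use g_nz in simp)
        thus "W holomorphic_on (ball z0 r - {z0})"
          by (rule holomorphic_transform) (auto simp: W_def)
      qed simp_all
      have "norm (exp (- W z0)) \<le> exp (-1/2)"
      proof (rule maximum_modulus_frontier[where S = "ball z0 r" and f = "\<lambda>s. exp (- W s)" and \<xi> = z0])
        show "(\<lambda>s. exp (- W s)) holomorphic_on interior (ball z0 r)"
          using Whol by (auto intro!: holomorphic_intros)
        have "continuous_on (cball z0 r) W"
        proof (rule continuous_at_imp_continuous_on, rule ballI)
          fix x assume "x \<in> cball z0 r" thus "isCont W x" by (rule Wcont)
        qed
        thus "continuous_on (closure (ball z0 r)) (\<lambda>s. exp (- W s))"
          using r by (simp add: continuous_on_exp continuous_on_minus)
        fix z assume z: "z \<in> frontier (ball z0 r)"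
        hence zsph: "z \<in> sphere z0 r" using r by simp
        hence zS: "z \<in> cball z0 r" "z \<noteq> z0" using r by auto
        obtain c where c: "((\<lambda>w. f w - g w) \<longlongrightarrow> c) (at z)" "norm c < e" using H zS by blast
        have "((\<lambda>w. f w - g w) \<longlongrightarrow> f z - g z) (at z)"
          using good[OF zS] g_an[OF zS]
          by (intro tendsto_diff isContD analytic_at_imp_isCont) auto
        with c(1) have "c = f z - g z" using tendsto_unique[OF at_neq_bot] by blast
        moreover have "e \<le> norm (f z)" using x0(2)[of z] zsph by (simp add: e_def S_def)
        ultimately have lt: "norm (f z - g z) < norm (f z)" using c(2) by auto
        have gz: "g z \<noteq> 0" using g_nz[OF zS] .
        have "cmod (W z - 1) = norm (f z - g z) / norm (g z)"
          using gz zS by (simp add: W_def field_simps norm_divide)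
        also have "\<dots> < norm (f z) / norm (g z)" using lt gz by (intro divide_strict_right_mono) auto
        also have "\<dots> = cmod (W z)" using zS by (simp add: W_def norm_divide)
        finally have "Re (W z) > 1/2" by (rule re_half)
        thus "norm (exp (- W z)) \<le> exp (-1/2)" by (simp add: norm_exp_eq_Re)
      qed (use r in simp_all)
      moreover have "W z0 = 0" by (simp add: W_def)
      ultimately show False by simp
    qed
  qed
qed

lemma pole_power_limit:
  assumes fm: "f meromorphic_on UNIV" and pole: "is_pole f b"
  shows "\<exists>n c. ((\<lambda>w. (w - b) ^ n * f w) \<longlongrightarrow> c) (at b)"
proof -
  have iso: "isolated_singularity_at f b"
    by (rule meromorphic_on_isolated_singularity, rule meromorphic_on_subset[OF fm]) auto
  have ness: "not_essential f b" using pole by (rule is_pole_imp_not_essential)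
  have freq: "\<exists>\<^sub>F w in at b. f w \<noteq> 0"
    using non_zero_neighbour_pole[OF pole] by (rule eventually_frequently[OF at_neq_bot])
  define n where "n = zorder f b"
  define g where "g = zor_poly f b"
  have nneg: "n < 0" unfolding n_def by (rule isolated_pole_imp_neg_zorder[OF iso pole])
  obtain r where r: "r > 0" "g holomorphic_on cball b r"
      "\<forall>w\<in>cball b r - {b}. f w = g w * (w - b) powi n \<and> g w \<noteq> 0"
    using zorder_exist[OF iso ness freq] unfolding n_def g_def by blast
  define k where "k = nat (- n)"
  have "isCont g b"
    using continuous_on_interior[OF holomorphic_on_imp_continuous_on[OF r(2)]] r(1) by simp
  hence "g \<midarrow>b\<rightarrow> g b" by (rule isContD)
  moreover have evb: "eventually (\<lambda>w. w \<in> ball b r - {b}) (at b)"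
    using r(1) by (intro eventually_at_in_open) auto
  have "\<forall>\<^sub>F w in at b. g w = (w - b) ^ k * f w"
    using evb
  proof eventually_elim
    case (elim w)
    hence w: "w \<in> cball b r - {b}" by auto
    hence "f w = g w * (w - b) powi n" using r(3) by blast
    also have "(w - b) powi n = inverse ((w - b) ^ k)"
      using nneg by (simp add: power_int_def k_def power_inverse)
    finally show ?case using w by (simp add: field_simps)
  qed
  ultimately have "((\<lambda>w. (w - b) ^ k * f w) \<longlongrightarrow> g b) (at b)"
    by (rule Lim_transform_eventually)
  thus ?thesis by blast
qed

lemma pole_power_limit_mono:
  fixes f :: "complex \<Rightarrow> complex"
  assumes "((\<lambda>w. (w - b) ^ n * f w) \<longlongrightarrow> c) (at b)" "n \<le> N"
  shows "\<exists>c. ((\<lambda>w. (w - b) ^ N * f w) \<longlongrightarrow> c) (at b)"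
proof -
  have "((\<lambda>w. (w - b) ^ (N - n) * ((w - b) ^ n * f w)) \<longlongrightarrow> (b - b) ^ (N - n) * c) (at b)"
    by (intro tendsto_mult tendsto_power tendsto_diff tendsto_ident_at tendsto_const assms(1))
  moreover have "(\<lambda>w. (w - b) ^ (N - n) * ((w - b) ^ n * f w)) = (\<lambda>w. (w - b) ^ N * f w)"
    using assms(2) by (auto simp: power_add[symmetric] mult.assoc)
  ultimately show ?thesis by auto
qed

lemma uniform_pole_power:
  assumes fm: "f meromorphic_on UNIV" and fin: "finite P" and poles: "\<forall>b\<in>P. is_pole f b"
  shows "\<exists>N. \<forall>b\<in>P. \<exists>c. ((\<lambda>w. (w - b) ^ N * f w) \<longlongrightarrow> c) (at b)"
  using fin poles
proof (induction P rule: finite_induct)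
  case empty thus ?case by simp
next
  case (insert b P)
  then obtain N where N: "\<forall>b\<in>P. \<exists>c. ((\<lambda>w. (w - b) ^ N * f w) \<longlongrightarrow> c) (at b)" by auto
  obtain n c where nc: "((\<lambda>w. (w - b) ^ n * f w) \<longlongrightarrow> c) (at b)"
    using pole_power_limit[OF fm] insert.prems by blast
  have "\<forall>b'\<in>insert b P. \<exists>c. ((\<lambda>w. (w - b') ^ max N n * f w) \<longlongrightarrow> c) (at b')"
  proof
    fix b' assume "b' \<in> insert b P"
    thus "\<exists>c. ((\<lambda>w. (w - b') ^ max N n * f w) \<longlongrightarrow> c) (at b')"
    proof
      assume "b' = b"
      thus ?thesis using pole_power_limit_mono[OF nc, of "max N n"] by simp
    next
      assume "b' \<in> P"
      then obtain c' where "((\<lambda>w. (w - b') ^ N * f w) \<longlongrightarrow> c') (at b')" using N by blast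
      thus ?thesis using pole_power_limit_mono[of b' N f c' "max N n"] by simp
    qed
  qed
  thus ?case by blast
qed

lemma ev_reflect:
  fixes z :: complex
  assumes "\<forall>\<^sub>F w in at (1 - z). P w"
  shows "\<forall>\<^sub>F s in at z. P (1 - s)"
proof -
  obtain d where d: "d > 0" "\<And>w. w \<noteq> 1 - z \<Longrightarrow> dist w (1 - z) < d \<Longrightarrow> P w"
    using assms unfolding eventually_at by blast
  show ?thesis unfolding eventually_at
  proof (intro exI[of _ d] conjI ballI impI)
    fix s :: complex assume s: "s \<noteq> z \<and> dist s z < d"
    have "dist (1 - s) (1 - z) = dist s z" by (simp add: dist_norm norm_minus_commute)
    thus "P (1 - s)" using s d(2)[of "1 - s"] by auto
  qed (use d in auto)
qed

lemma dense_main: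
  assumes Qm: "Q meromorphic_on UNIV" and Qnz: "not_ident_zero Q"
    and f: "f \<in> MQ Q" and K: "compact K" and e: "e > 0"
  shows "\<exists>g\<in>MQ Q. (f holomorphic_on UNIV \<longrightarrow> g holomorphic_on UNIV) \<and>
           (\<forall>z\<in>K. \<exists>c. ((\<lambda>w. f w - g w) \<longlongrightarrow> c) (at z) \<and> norm c < e) \<and>
           (\<exists>a. Re a \<noteq> 1/2 \<and> ((\<lambda>s. Q s * g s) \<longlongrightarrow> 0) (at a))"
proof -
  have fnm: "f nicely_meromorphic_on UNIV" and fnz: "not_ident_zero f"
    and feq: "\<forall>z. \<forall>\<^sub>F s in at z. Q s * f s = Q (1 - s) * f (1 - s)"
    using f by (auto simp: MQ_def)
  have fm: "f meromorphic_on UNIV" using fnm by (simp add: nicely_meromorphic_on_def)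
  define P where "P = {b\<in>K. is_pole f b}"
  have "{w. \<not> f analytic_on {w}} sparse_in UNIV"
    by (rule meromorphic_on_imp_sparse_singularities[OF fm])
  hence "{w. \<not> f analytic_on {w}} sparse_in K" by (rule sparse_in_subset) simp
  hence "finite (K \<inter> {w. \<not> f analytic_on {w}})" using K by (rule sparse_in_compact_finite)
  moreover have "P \<subseteq> K \<inter> {w. \<not> f analytic_on {w}}"
    unfolding P_def using analytic_at_imp_no_pole by blast
  ultimately have finP: "finite P" by (rule finite_subset[rotated])
  obtain N where N: "\<forall>b\<in>P. \<exists>c. ((\<lambda>w. (w - b) ^ N * f w) \<longlongrightarrow> c) (at b)"
    using uniform_pole_power[OF fm finP] unfolding P_def by auto
  define p where "p = (\<lambda>s::complex. \<Prod>b\<in>P. ((s - b) * (1 - s - b)) ^ N)"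
  define u where "u = (\<lambda>s::complex. (s - 1/2)^2)"
  have psym: "p (1 - s) = p s" for s
    unfolding p_def by (intro prod.cong refl) (simp add: algebra_simps)
  have usym: "u (1 - s) = u s" for s
    unfolding u_def by (simp add: power2_eq_square algebra_simps)
  have p_an: "p analytic_on UNIV" unfolding p_def by (intro analytic_intros)
  have u_an: "u analytic_on UNIV" unfolding u_def by (intro analytic_intros)
  have p_cont: "isCont p z" for z
    using p_an by (intro analytic_at_imp_isCont) (rule analytic_on_subset, auto)
  have u_cont: "isCont u z" for z
    using u_an by (intro analytic_at_imp_isCont) (rule analytic_on_subset, auto)
  have fp_lim: "\<exists>L. ((\<lambda>w. f w * p w) \<longlongrightarrow> L) (at z)" if z: "z \<in> K" for z
  proof (cases "is_pole f z")
    case False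
    hence "f analytic_on {z}" using nicely_meromorphic_on_imp_analytic_at[OF fnm] by blast
    hence "f \<midarrow>z\<rightarrow> f z" by (simp add: analytic_at_imp_isCont isContD)
    moreover have "p \<midarrow>z\<rightarrow> p z" using p_cont by (rule isContD)
    ultimately show ?thesis by (blast intro: tendsto_mult)
  next
    case True
    hence zP: "z \<in> P" using z by (simp add: P_def)
    then obtain c where c: "((\<lambda>w. (w - z) ^ N * f w) \<longlongrightarrow> c) (at z)" using N by blast
    define q where "q = (\<lambda>s::complex. (1 - s - z) ^ N * (\<Prod>b\<in>P - {z}. ((s - b) * (1 - s - b)) ^ N))"
    have "q analytic_on UNIV" unfolding q_def by (intro analytic_intros)
    hence "isCont q z" by (intro analytic_at_imp_isCont) (rule analytic_on_subset, auto)
    hence "q \<midarrow>z\<rightarrow> q z" by (rule isContD)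
    hence "((\<lambda>w. ((w - z) ^ N * f w) * q w) \<longlongrightarrow> c * q z) (at z)" using c by (intro tendsto_mult)
    moreover have "(\<lambda>w. ((w - z) ^ N * f w) * q w) = (\<lambda>w. f w * p w)"
    proof
      fix w
      have "p w = ((w - z) * (1 - w - z)) ^ N * (\<Prod>b\<in>P - {z}. ((w - b) * (1 - w - b)) ^ N)"
        unfolding p_def using finP zP by (simp add: prod.remove)
      thus "((w - z) ^ N * f w) * q w = f w * p w" unfolding q_def power_mult_distrib by (simp add: mult_ac)
    qed
    ultimately show ?thesis by auto
  qed
  define G where "G = (\<lambda>w. f w * p w)"
  have Gm: "G meromorphic_on UNIV"
    unfolding G_def by (intro meromorphic_on_mult fm analytic_on_imp_meromorphic_on p_an)
  have Giso: "isolated_singularity_at G z" for z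
    by (rule meromorphic_on_isolated_singularity, rule meromorphic_on_subset[OF Gm]) auto
  define F where "F = remove_sings G"
  have F_lim: "(G \<longlongrightarrow> F z) (at z)" if zK: "z \<in> K" for z
  proof -
    obtain L where L: "(G \<longlongrightarrow> L) (at z)" using fp_lim[OF zK] unfolding G_def by blast
    hence "F z = L" unfolding F_def by (rule remove_sings_eqI)
    thus ?thesis using L by simp
  qed
  have F_cont: "isCont F z" if "z \<in> K" for z
  proof -
    have "(remove_sings G \<longlongrightarrow> F z) (at z)"
      using F_lim[OF that] tendsto_remove_sings_iff[OF Giso[of z]] by simp
    thus ?thesis unfolding isCont_def F_def .
  qed
  obtain B where B: "B > 0" "\<forall>z\<in>K. norm (F z) \<le> B"
  proof -
    have "continuous_on K F"
    proof (rule continuous_at_imp_continuous_on, rule ballI)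
      fix x assume "x \<in> K" thus "isCont F x" by (rule F_cont)
    qed
    hence "compact (F ` K)" using K by (rule compact_continuous_image)
    hence "bounded (F ` K)" by (rule compact_imp_bounded)
    thus ?thesis using that unfolding bounded_pos by auto
  qed
  obtain R where R: "R > 0" "\<forall>z\<in>K. norm (u z) \<le> R"
  proof -
    have "continuous_on K u"
    proof (rule continuous_at_imp_continuous_on, rule ballI)
      fix x assume "x \<in> K" show "isCont u x" by (rule u_cont)
    qed
    hence "compact (u ` K)" using K by (rule compact_continuous_image)
    hence "bounded (u ` K)" by (rule compact_imp_bounded)
    thus ?thesis using that unfolding bounded_pos by auto
  qed
  define a0 where "a0 = complex_of_real (R + 3)"
  have finP': "finite (P \<union> (\<lambda>b. 1 - b) ` P)" using finP by simp
  have ev1: "\<forall>\<^sub>F s in at a0. \<forall>y\<in>P \<union> (\<lambda>b. 1 - b) ` P. s \<noteq> y"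
    by (rule eventually_ball_finite[OF finP']) (simp add: eventually_neq_at_within)
  have ev2: "\<forall>\<^sub>F s in at a0. s \<in> ball a0 1"
    using eventually_at_ball[of 1 a0 UNIV] by simp
  have "\<forall>\<^sub>F s in at a0. (Q analytic_on {s} \<and> f analytic_on {s}) \<and> (\<forall>y\<in>P \<union> (\<lambda>b. 1 - b) ` P. s \<noteq> y) \<and> s \<in> ball a0 1"
    using ev_analytic[OF Qm, of a0] ev_analytic[OF fm, of a0] ev1 ev2 by eventually_elim blast
  then obtain a where a_an: "Q analytic_on {a}" "f analytic_on {a}"
      and a_notP: "\<forall>y\<in>P \<union> (\<lambda>b. 1 - b) ` P. a \<noteq> y" and a_ball: "a \<in> ball a0 1"
    using eventually_happens'[OF at_neq_bot] by blast
  have Re_a: "Re a > R + 2"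
  proof -
    have "\<bar>Re a - (R + 3)\<bar> \<le> cmod (a - a0)"
      unfolding a0_def by (metis abs_Re_le_cmod minus_complex.simps(1) Re_complex_of_real)
    also have "\<dots> < 1" using a_ball by (simp add: dist_norm norm_minus_commute)
    finally show ?thesis by linarith
  qed
  have ua: "norm (u a) \<ge> R + 1"
  proof -
    have "R + 3/2 \<le> Re (a - 1/2)" using Re_a by simp
    also have "\<dots> \<le> cmod (a - 1/2)" by (rule complex_Re_le_cmod)
    finally have h: "R + 3/2 \<le> cmod (a - 1/2)" .
    have "(R + 3/2)^2 \<le> cmod (a - 1/2) ^ 2" by (rule power_mono[OF h]) (use R in simp)
    moreover have "(R + 3/2)^2 = R^2 + 3*R + 9/4" by (simp add: power2_eq_square algebra_simps)
    moreover have "norm (u a) = cmod (a - 1/2) ^ 2" by (simp add: u_def norm_power)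
    moreover have "R^2 \<ge> 0" by simp
    ultimately show ?thesis using R(1) by linarith
  qed
  have pa: "p a \<noteq> 0"
  proof -
    have "(a - b) * (1 - a - b) \<noteq> 0" if b: "b \<in> P" for b
    proof -
      have "a \<noteq> b" using a_notP b by auto
      moreover have "a \<noteq> 1 - b" using a_notP b by auto
      hence "1 - a - b \<noteq> 0" by (auto simp: algebra_simps)
      ultimately show ?thesis by simp
    qed
    thus ?thesis unfolding p_def using finP by (simp add: prod_zero_iff)
  qed
  have ua_nz: "u a \<noteq> 0" using ua R(1) by auto
  define rho where "rho = R / (R + 1)"
  have rho: "0 \<le> rho" "rho < 1" using R(1) by (auto simp: rho_def)
  have "e * norm (p a) / B > 0" using e pa B(1) by auto
  then obtain M0 where M0: "rho ^ M0 < e * norm (p a) / B" using real_arch_pow_inv rho(2) by blast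
  define M where "M = Suc M0"
  have rhoM: "rho ^ M \<le> rho ^ M0" unfolding M_def by (rule power_decreasing) (use rho in auto)
  define D where "D = p a * u a ^ M"
  have D_nz: "D \<noteq> 0" using pa ua_nz by (simp add: D_def)
  define m where "m = (\<lambda>s. 1 - p s * u s ^ M / D)"
  have m_an: "m analytic_on UNIV" unfolding m_def using p_an u_an D_nz by (auto intro!: analytic_intros)
  have msym: "m (1 - s) = m s" for s by (simp add: m_def psym usym)
  have ma: "m a = 0" using D_nz by (simp add: m_def D_def)
  have mhalf: "m (1/2) = 1" by (simp add: m_def u_def M_def)
  define g where "g = remove_sings (\<lambda>s. f s * m s)"
  have fmm: "(\<lambda>s. f s * m s) meromorphic_on UNIV"
    by (intro meromorphic_on_mult fm analytic_on_imp_meromorphic_on m_an)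
  have geq: "\<forall>\<^sub>F s in at z. g s = f s * m s" for z
    unfolding g_def by (rule eventually_remove_sings_eq_at, rule meromorphic_on_isolated_singularity,
                        rule meromorphic_on_subset[OF fmm]) auto
  have mm: "m meromorphic_on UNIV" by (rule analytic_on_imp_meromorphic_on[OF m_an])
  have mnz: "not_ident_zero m"
    unfolding not_ident_zero_def
  proof (intro exI[of _ "1/2"] notI)
    assume "\<forall>\<^sub>F w in at (1/2). m w = 0"
    hence "m \<midarrow>1/2\<rightarrow> 0" by (rule tendsto_eventually)
    moreover have "m \<midarrow>1/2\<rightarrow> m (1/2)"
      using m_an by (intro isContD analytic_at_imp_isCont) (rule analytic_on_subset, auto)
    ultimately have "m (1/2) = 0" using tendsto_unique[OF at_neq_bot] by blast
    thus False using mhalf by simp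
  qed
  have gMQ: "g \<in> MQ Q"
    unfolding MQ_def
  proof (intro CollectI conjI allI)
    show "g nicely_meromorphic_on UNIV" unfolding g_def by (rule remove_sings_nicely_meromorphic[OF fmm])
    show "not_ident_zero g"
    proof -
      obtain z1 where z1: "\<not> (\<forall>\<^sub>F w in at z1. f w = 0)" using fnz unfolding not_ident_zero_def by blast
      have "\<not> (\<forall>\<^sub>F w in at z1. g w = 0)"
      proof
        assume "\<forall>\<^sub>F w in at z1. g w = 0"
        hence "\<forall>\<^sub>F w in at z1. f w = 0"
          using geq[of z1] ev_nonzero[OF mm mnz, of z1] by eventually_elim auto
        with z1 show False by blast
      qed
      thus ?thesis unfolding not_ident_zero_def by blast
    qed
    fix z
    show "\<forall>\<^sub>F s in at z. Q s * g s = Q (1 - s) * g (1 - s)"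
      using geq[of z] ev_reflect[OF geq[of "1 - z"]] feq[rule_format, of z]
    proof eventually_elim
      case (elim s)
      have "Q s * g s = (Q s * f s) * m s" using elim(1) by (simp add: mult.assoc)
      also have "\<dots> = (Q (1 - s) * f (1 - s)) * m (1 - s)" using elim(3) by (simp add: msym)
      also have "\<dots> = Q (1 - s) * g (1 - s)" using elim(2) by (simp add: mult.assoc)
      finally show ?case .
    qed
  qed
  show ?thesis
  proof (rule bexI[OF _ gMQ], intro conjI impI ballI)
    assume fh: "f holomorphic_on UNIV"
    have fa: "(\<lambda>s. f s * m s) analytic_on UNIV"
      using fh m_an by (intro analytic_on_mult) (simp_all add: analytic_on_open)
    have "g = (\<lambda>s. f s * m s)"
    proof
      fix s
      have "(\<lambda>s. f s * m s) analytic_on {s}" using fa by (rule analytic_on_subset) auto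
      thus "g s = f s * m s" unfolding g_def by (rule remove_sings_at_analytic)
    qed
    thus "g holomorphic_on UNIV" using fa by (simp add: analytic_imp_holomorphic)
  next
    fix z assume z: "z \<in> K"
    define c where "c = F z * u z ^ M / D"
    have "((\<lambda>w. G w * u w ^ M / D) \<longlongrightarrow> c) (at z)"
      unfolding c_def
      by (rule tendsto_divide[OF tendsto_mult[OF F_lim[OF z] tendsto_power[OF isContD[OF u_cont]]] tendsto_const D_nz])
    moreover have "\<forall>\<^sub>F w in at z. G w * u w ^ M / D = f w - g w"
      using geq[of z] by eventually_elim (simp add: m_def G_def algebra_simps)
    ultimately have lim: "((\<lambda>w. f w - g w) \<longlongrightarrow> c) (at z)" by (rule Lim_transform_eventually)
    have "norm c = norm (F z) * norm (u z) ^ M / (norm (p a) * norm (u a) ^ M)"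
      by (simp add: c_def D_def norm_mult norm_divide norm_power)
    also have "\<dots> \<le> B * R ^ M / (norm (p a) * (R + 1) ^ M)"
    proof (rule frac_le)
      show "0 \<le> B * R ^ M" using B R by simp
      show "norm (F z) * norm (u z) ^ M \<le> B * R ^ M"
        using B z R by (intro mult_mono power_mono) auto
      show "0 < norm (p a) * (R + 1) ^ M" using pa R by simp
      show "norm (p a) * (R + 1) ^ M \<le> norm (p a) * norm (u a) ^ M"
        using ua R by (intro mult_left_mono power_mono) auto
    qed
    also have "\<dots> = B / norm (p a) * rho ^ M"
      by (simp add: rho_def power_divide)
    also have "\<dots> \<le> B / norm (p a) * rho ^ M0"
      using rhoM B pa by (intro mult_left_mono) auto
    also have "\<dots> < B / norm (p a) * (e * norm (p a) / B)"
      using M0 B pa by (intro mult_strict_left_mono) auto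
    also have "\<dots> = e" using B pa by (simp add: field_simps)
    finally show "\<exists>c. ((\<lambda>w. f w - g w) \<longlongrightarrow> c) (at z) \<and> norm c < e" using lim by blast
  next
    have "Re a \<noteq> 1/2" using Re_a R by auto
    moreover have "((\<lambda>s. Q s * g s) \<longlongrightarrow> 0) (at a)"
    proof -
      have "((\<lambda>s. Q s * (f s * m s)) \<longlongrightarrow> Q a * (f a * m a)) (at a)"
        using a_an m_an
        by (intro tendsto_mult isContD analytic_at_imp_isCont) (auto intro: analytic_on_subset)
      hence "((\<lambda>s. Q s * (f s * m s)) \<longlongrightarrow> 0) (at a)" using ma by simp
      moreover have "\<forall>\<^sub>F s in at a. Q s * (f s * m s) = Q s * g s"
        using geq[of a] by eventually_elim simp
      ultimately show ?thesis by (rule Lim_transform_eventually)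
    qed
    ultimately show "\<exists>a. Re a \<noteq> 1/2 \<and> ((\<lambda>s. Q s * g s) \<longlongrightarrow> 0) (at a)" by blast
  qed
qed

theorem theorem1:
  fixes Q :: "complex \<Rightarrow> complex"
  assumes "Q meromorphic_on UNIV"
    and "not_ident_zero Q"
  shows "mero_open (MQ Q) (MQ Q - RMQ Q) \<and> mero_dense (MQ Q) (MQ Q - RMQ Q) \<and>
         mero_open (HQ Q) (HQ Q - RHQ Q) \<and> mero_dense (HQ Q) (HQ Q - RHQ Q)"
proof -
  note Qm = assms(1) and Qnz = assms(2)
  have HM: "HQ Q \<subseteq> MQ Q" by (auto simp: HQ_def)
  have notR: "g \<notin> RMQ Q" "g \<notin> RHQ Q" if "Re z \<noteq> 1/2" "((\<lambda>s. Q s * g s) \<longlongrightarrow> 0) (at z)" for g z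
    using that by (auto simp: RMQ_def RHQ_def mero_zero_def Lambda_Q_def)
  have zeroR: "\<exists>z0. Re z0 \<noteq> 1/2 \<and> ((\<lambda>s. Q s * f s) \<longlongrightarrow> 0) (at z0)"
    if "f \<in> MQ Q" "f \<notin> RMQ Q" for f
    using that by (auto simp: RMQ_def mero_zero_def Lambda_Q_def)
  have zeroRH: "\<exists>z0. Re z0 \<noteq> 1/2 \<and> ((\<lambda>s. Q s * f s) \<longlongrightarrow> 0) (at z0)"
    if "f \<in> HQ Q" "f \<notin> RHQ Q" for f
    using that by (auto simp: RHQ_def HQ_def mero_zero_def Lambda_Q_def)
  have o1: "mero_open (MQ Q) (MQ Q - RMQ Q)"
    unfolding mero_open_def
  proof (intro conjI ballI)
    show "MQ Q - RMQ Q \<subseteq> MQ Q" by blast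
    fix f assume f: "f \<in> MQ Q - RMQ Q"
    then obtain z0 where z0: "Re z0 \<noteq> 1/2" "((\<lambda>s. Q s * f s) \<longlongrightarrow> 0) (at z0)"
      using zeroR by blast
    obtain K e where Ke: "compact K" "e > 0" and H: "\<forall>g\<in>MQ Q. (\<forall>z\<in>K. \<exists>c. ((\<lambda>w. f w - g w) \<longlongrightarrow> c) (at z) \<and> norm c < e)
            \<longrightarrow> (\<exists>z. Re z \<noteq> 1/2 \<and> ((\<lambda>s. Q s * g s) \<longlongrightarrow> 0) (at z))"
      using open_main[OF Qm Qnz _ z0] f by blast
    have "mero_nbhd (MQ Q) f K e \<subseteq> MQ Q - RMQ Q"
    proof
      fix g assume g: "g \<in> mero_nbhd (MQ Q) f K e"
      hence gM: "g \<in> MQ Q" by (simp add: mero_nbhd_def)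
      then obtain z where "Re z \<noteq> 1/2" "((\<lambda>s. Q s * g s) \<longlongrightarrow> 0) (at z)"
        using H g by (auto simp: mero_nbhd_def)
      thus "g \<in> MQ Q - RMQ Q" using gM notR by blast
    qed
    thus "\<exists>K e. compact K \<and> e > 0 \<and> mero_nbhd (MQ Q) f K e \<subseteq> MQ Q - RMQ Q" using Ke by blast
  qed
  have o2: "mero_open (HQ Q) (HQ Q - RHQ Q)"
    unfolding mero_open_def
  proof (intro conjI ballI)
    show "HQ Q - RHQ Q \<subseteq> HQ Q" by blast
    fix f assume f: "f \<in> HQ Q - RHQ Q"
    then obtain z0 where z0: "Re z0 \<noteq> 1/2" "((\<lambda>s. Q s * f s) \<longlongrightarrow> 0) (at z0)"
      using zeroRH by blast
    have fM: "f \<in> MQ Q" using f HM by blast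
    obtain K e where Ke: "compact K" "e > 0" and H: "\<forall>g\<in>MQ Q. (\<forall>z\<in>K. \<exists>c. ((\<lambda>w. f w - g w) \<longlongrightarrow> c) (at z) \<and> norm c < e)
            \<longrightarrow> (\<exists>z. Re z \<noteq> 1/2 \<and> ((\<lambda>s. Q s * g s) \<longlongrightarrow> 0) (at z))"
      using open_main[OF Qm Qnz fM z0] by blast
    have "mero_nbhd (HQ Q) f K e \<subseteq> HQ Q - RHQ Q"
    proof
      fix g assume g: "g \<in> mero_nbhd (HQ Q) f K e"
      hence gH: "g \<in> HQ Q" by (simp add: mero_nbhd_def)
      hence gM: "g \<in> MQ Q" using HM by blast
      then obtain z where "Re z \<noteq> 1/2" "((\<lambda>s. Q s * g s) \<longlongrightarrow> 0) (at z)"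
        using H g by (auto simp: mero_nbhd_def)
      thus "g \<in> HQ Q - RHQ Q" using gH notR by blast
    qed
    thus "\<exists>K e. compact K \<and> e > 0 \<and> mero_nbhd (HQ Q) f K e \<subseteq> HQ Q - RHQ Q" using Ke by blast
  qed
  have d1: "mero_dense (MQ Q) (MQ Q - RMQ Q)"
    unfolding mero_dense_def
  proof (intro conjI ballI allI impI)
    show "MQ Q - RMQ Q \<subseteq> MQ Q" by blast
    fix f and K :: "complex set" and e :: real assume f: "f \<in> MQ Q" and Ke: "compact K \<and> e > 0"
    obtain g a where g: "g \<in> MQ Q" "\<forall>z\<in>K. \<exists>c. ((\<lambda>w. f w - g w) \<longlongrightarrow> c) (at z) \<and> norm c < e"
       and a: "Re a \<noteq> 1/2" "((\<lambda>s. Q s * g s) \<longlongrightarrow> 0) (at a)"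
      using dense_main[OF Qm Qnz f] Ke by blast
    have "g \<in> mero_nbhd (MQ Q) f K e" using g by (simp add: mero_nbhd_def)
    moreover have "g \<in> MQ Q - RMQ Q" using g(1) notR(1)[OF a] by blast
    ultimately show "mero_nbhd (MQ Q) f K e \<inter> (MQ Q - RMQ Q) \<noteq> {}" by blast
  qed
  have d2: "mero_dense (HQ Q) (HQ Q - RHQ Q)"
    unfolding mero_dense_def
  proof (intro conjI ballI allI impI)
    show "HQ Q - RHQ Q \<subseteq> HQ Q" by blast
    fix f and K :: "complex set" and e :: real assume f: "f \<in> HQ Q" and Ke: "compact K \<and> e > 0"
    have fM: "f \<in> MQ Q" and fh: "f holomorphic_on UNIV" using f by (auto simp: HQ_def)
    obtain g a where g: "g \<in> MQ Q" "f holomorphic_on UNIV \<longrightarrow> g holomorphic_on UNIV"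
       "\<forall>z\<in>K. \<exists>c. ((\<lambda>w. f w - g w) \<longlongrightarrow> c) (at z) \<and> norm c < e"
       and a: "Re a \<noteq> 1/2" "((\<lambda>s. Q s * g s) \<longlongrightarrow> 0) (at a)"
      using dense_main[OF Qm Qnz fM] Ke by blast
    have gH: "g \<in> HQ Q" using g(1,2) fh by (simp add: HQ_def)
    have "g \<in> mero_nbhd (HQ Q) f K e" using gH g(3) by (simp add: mero_nbhd_def)
    moreover have "g \<in> HQ Q - RHQ Q" using gH notR(2)[OF a] by blast
    ultimately show "mero_nbhd (HQ Q) f K e \<inter> (HQ Q - RHQ Q) \<noteq> {}" by blast
  qed
  show ?thesis using o1 o2 d1 d2 by blast
qed

end
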